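(* Let $P$ be a finite lattice and $R,R'\in\mathrm{Tr}(P)$ with $\chi^R=\chi^{R'}$. Then $\chi^{R\wedge R'}=\chi^R=\chi^{R'}$, where $R\wedge R'$ is the meet (intersection of relations) in $\mathrm{Tr}(P)$.
   Context: For a finite lattice $(P,\le)$, a transfer system on $P$ is a partial order $R$ on $P$ refining $\le$ that is closed under restriction: if $x\,R\,z$ and $y\le z$ then $(x\wedge y)\,R\,y$. $\mathrm{Tr}(P)$ is the lattice of transfer systems ordered by inclusion of relations. For $R\in\mathrm{Tr}(P)$ and $x\in P$, $\chi^R(x)$ denotes the least element of $\{y\in P: y\,R\,x\}$ (which exists). *)

theory Defs
  imports Main
begin

definition transfer_system :: "('a::{finite,lattice}) rel \<Rightarrow> bool" where
  "transfer_system R \<longleftrightarrow>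
     partial_order_on UNIV R \<and>
     R \<subseteq> {(x, y). x \<le> y} \<and>
     (\<forall>x y z. (x, z) \<in> R \<longrightarrow> y \<le> z \<longrightarrow> (inf x y, y) \<in> R)"

definition chi :: "('a::{finite,lattice}) rel \<Rightarrow> 'a \<Rightarrow> 'a" where
  "chi R x = (THE y. (y, x) \<in> R \<and> (\<forall>z. (z, x) \<in> R \<longrightarrow> y \<le> z))"

end

theory Submission
  imports Defs
begin

lemma closed_meet:
  assumes T: "transfer_system R" and y: "(y, x) \<in> R" and z: "(z, x) \<in> R"
  shows "(inf y z, x) \<in> R"
proof -
  have le: "z \<le> x" using T z unfolding transfer_system_def by auto
  have "(inf y z, z) \<in> R" using T y le unfolding transfer_system_def by blast
  moreover have "trans R" using T unfolding transfer_system_def partial_order_on_def preorder_on_def by blast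
  ultimately show ?thesis using z by (meson transE)
qed

lemma least_ex:
  assumes T: "transfer_system R"
  shows "\<exists>y. (y, x) \<in> R \<and> (\<forall>z. (z, x) \<in> R \<longrightarrow> y \<le> z)"
proof -
  let ?A = "{y. (y, x) \<in> R}"
  have "(x, x) \<in> R" using T unfolding transfer_system_def partial_order_on_def preorder_on_def refl_on_def by blast
  hence ne: "?A \<noteq> {}" by blast
  obtain m where m: "m \<in> ?A" "\<forall>b\<in>?A. b \<le> m \<longrightarrow> m = b"
    using finite_has_minimal[OF finite ne] by blast
  have "\<forall>z. (z, x) \<in> R \<longrightarrow> m \<le> z"
  proof (intro allI impI)
    fix z assume "(z, x) \<in> R"
    hence "inf m z \<in> ?A" using closed_meet[OF T] m(1) by blast
    hence "m = inf m z" using m(2) by auto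
    thus "m \<le> z" by (metis inf.cobounded2)
  qed
  thus ?thesis using m(1) by blast
qed

lemma chi_prop:
  assumes T: "transfer_system R"
  shows "(chi R x, x) \<in> R \<and> (\<forall>z. (z, x) \<in> R \<longrightarrow> chi R x \<le> z)"
proof -
  obtain y where y: "(y, x) \<in> R \<and> (\<forall>z. (z, x) \<in> R \<longrightarrow> y \<le> z)" using least_ex[OF T] by blast
  have "chi R x = y" unfolding chi_def
    by (rule the_equality) (use y in \<open>auto intro: order.antisym\<close>)
  thus ?thesis using y by simp
qed

theorem lemma2p11:
  fixes R R' :: "('a::{finite,lattice}) rel"
  assumes "transfer_system R" and "transfer_system R'"
    and "chi R = chi R'"
  shows "chi (R \<inter> R') = chi R \<and> chi (R \<inter> R') = chi R'"
proof -
  have "chi (R \<inter> R') x = chi R x" for x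
  proof -
    have a: "(chi R x, x) \<in> R \<inter> R'"
      using chi_prop[OF assms(1)] chi_prop[OF assms(2)] assms(3) by (metis IntI)
    have b: "\<forall>z. (z, x) \<in> R \<inter> R' \<longrightarrow> chi R x \<le> z"
      using chi_prop[OF assms(1)] by blast
    show ?thesis unfolding chi_def[of "R \<inter> R'"]
      by (rule the_equality) (use a b in \<open>auto intro: order.antisym\<close>)
  qed
  thus ?thesis using assms(3) by auto
qed

end
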